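(* Let $X$ be a compact Hausdorff space with its canonical uniform structure, $f\colon X\setminus I(f)\to X$ a partially continuous self-map, and $\xi,\xi'$ two admissible sequences for $(X,f)$. Let $\mathcal E,\mathcal E',\mathcal E''$ be symmetric entourages with $\mathcal E'\circ\mathcal E'\subseteq\mathcal E$ and $\mathcal E''\circ\mathcal E''\subseteq\mathcal E'$, and let $n\ge0$. Then (i) if $\xi_n\subseteq\xi'_n$, then $S(n,\xi,\mathcal E)\le S(n,\xi',\mathcal E)$; (ii) if $\overline{\xi_n}\subseteq\overline{\xi'_n}$, then $R(n,\xi,\mathcal E)\le R(n,\xi',\mathcal E'')$. In particular, if $\overline{\xi_n}\subseteq\overline{\xi'_n}$ for all sufficiently large $n$, then $h_{\mathrm{top}}(f,\xi)\le h_{\mathrm{top}}(f,\xi')$.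
   Context: A partially continuous self-map is a continuous $f\colon X\setminus I(f)\to X$ with $I(f)$ closed. Entourages of the canonical uniform structure are the neighbourhoods of the diagonal; $\mathcal E'\circ\mathcal E'=\{(x,y):\exists z,(x,z),(z,y)\in\mathcal E'\}$. An admissible sequence is a sequence $\xi=(\xi_n)_{n\ge0}$ of subsets of $X$ with $\xi_n\subseteq X\setminus I(f)$ and $f(\xi_n)\subseteq\xi_{n-1}$ for $n\ge1$. Let $\xi^{\max}_0=X$, $\xi^{\max}_n=\{x\in X\setminus I(f):f(x)\in\xi^{\max}_{n-1}\}$; for $x\in\xi^{\max}_n$, $B^n_{\mathcal E}(x)=\{y\in\xi^{\max}_n:(f^i(x),f^i(y))\in\mathcal E,0\le i\le n\}$. Points $x,y\in\xi_n$ are $(n,\xi,\mathcal E)$-separated if $x\notin B^n_{\mathcal E}(y)$; $F\subset\xi_n$ is $(n,\xi,\mathcal E)$-covering if $\xi_n\subseteq\bigcup_{x\in F}B^n_{\mathcal E}(x)$. $R(n,\xi,\mathcal E)$ is the minimal cardinality of a covering set, $S(n,\xi,\mathcal E)$ the maximal cardinality of a pairwise separated set, and $h_{\mathrm{top}}(f,\xi)=\sup_{\mathcal E}\limsup_n\frac1n\log S(n,\xi,\mathcal E)=\sup_{\mathcal E}\limsup_n\frac1n\log R(n,\xi,\mathcal E)$ (set to $-\infty$ if some $\xi_n$ is empty). *)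

theory Defs
  imports "HOL-Analysis.Analysis" "HOL-Library.Extended_Nat" "HOL-Library.Extended_Real"
begin

text \<open>Canonical uniform structure of a compact Hausdorff space X: entourages are the
  neighbourhoods of the diagonal in X \<times> X (product topology).\<close>
definition entourage :: "'a topology \<Rightarrow> ('a \<times> 'a) set \<Rightarrow> bool" where
  "entourage X E \<longleftrightarrow> E \<subseteq> topspace X \<times> topspace X \<and>
     (\<exists>U. openin (prod_topology X X) U \<and> {(x, x) | x. x \<in> topspace X} \<subseteq> U \<and> U \<subseteq> E)"

definition sym_entourage :: "'a topology \<Rightarrow> ('a \<times> 'a) set \<Rightarrow> bool" where
  "sym_entourage X E \<longleftrightarrow> entourage X E \<and> (\<forall>x y. (x, y) \<in> E \<longrightarrow> (y, x) \<in> E)"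

definition partially_continuous :: "'a topology \<Rightarrow> 'a set \<Rightarrow> ('a \<Rightarrow> 'a) \<Rightarrow> bool" where
  "partially_continuous X I f \<longleftrightarrow> closedin X I \<and>
     continuous_map (subtopology X (topspace X - I)) X f"

definition admissible :: "'a topology \<Rightarrow> 'a set \<Rightarrow> ('a \<Rightarrow> 'a) \<Rightarrow> (nat \<Rightarrow> 'a set) \<Rightarrow> bool" where
  "admissible X I f \<xi> \<longleftrightarrow> (\<forall>n. \<xi> n \<subseteq> topspace X - I) \<and> (\<forall>n. f ` \<xi> (Suc n) \<subseteq> \<xi> n)"

fun xi_max :: "'a topology \<Rightarrow> 'a set \<Rightarrow> ('a \<Rightarrow> 'a) \<Rightarrow> nat \<Rightarrow> 'a set" where
  "xi_max X I f 0 = topspace X"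
| "xi_max X I f (Suc n) = {x \<in> topspace X - I. f x \<in> xi_max X I f n}"

definition dyn_ball :: "'a topology \<Rightarrow> 'a set \<Rightarrow> ('a \<Rightarrow> 'a) \<Rightarrow> nat \<Rightarrow> ('a \<times> 'a) set \<Rightarrow> 'a \<Rightarrow> 'a set" where
  "dyn_ball X I f n E x = {y \<in> xi_max X I f n. \<forall>i\<le>n. ((f ^^ i) x, (f ^^ i) y) \<in> E}"

definition separated_set :: "'a topology \<Rightarrow> 'a set \<Rightarrow> ('a \<Rightarrow> 'a) \<Rightarrow> nat \<Rightarrow> (nat \<Rightarrow> 'a set) \<Rightarrow> ('a \<times> 'a) set \<Rightarrow> 'a set \<Rightarrow> bool" where
  "separated_set X I f n \<xi> E F \<longleftrightarrow> F \<subseteq> \<xi> n \<and>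
     (\<forall>x\<in>F. \<forall>y\<in>F. x \<noteq> y \<longrightarrow> x \<notin> dyn_ball X I f n E y)"

definition covering_set :: "'a topology \<Rightarrow> 'a set \<Rightarrow> ('a \<Rightarrow> 'a) \<Rightarrow> nat \<Rightarrow> (nat \<Rightarrow> 'a set) \<Rightarrow> ('a \<times> 'a) set \<Rightarrow> 'a set \<Rightarrow> bool" where
  "covering_set X I f n \<xi> E F \<longleftrightarrow> F \<subseteq> \<xi> n \<and> \<xi> n \<subseteq> (\<Union>x\<in>F. dyn_ball X I f n E x)"

definition ecard :: "'a set \<Rightarrow> enat" where
  "ecard A = (if finite A then enat (card A) else \<infinity>)"

definition S_num :: "'a topology \<Rightarrow> 'a set \<Rightarrow> ('a \<Rightarrow> 'a) \<Rightarrow> nat \<Rightarrow> (nat \<Rightarrow> 'a set) \<Rightarrow> ('a \<times> 'a) set \<Rightarrow> enat" where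
  "S_num X I f n \<xi> E = (SUP F \<in> {F. separated_set X I f n \<xi> E F}. ecard F)"

definition R_num :: "'a topology \<Rightarrow> 'a set \<Rightarrow> ('a \<Rightarrow> 'a) \<Rightarrow> nat \<Rightarrow> (nat \<Rightarrow> 'a set) \<Rightarrow> ('a \<times> 'a) set \<Rightarrow> enat" where
  "R_num X I f n \<xi> E = (INF F \<in> {F. covering_set X I f n \<xi> E F}. ecard F)"

definition elog :: "enat \<Rightarrow> ereal" where
  "elog k = (if k = \<infinity> then \<infinity> else if k = 0 then -\<infinity> else ereal (ln (real (the_enat k))))"

definition htop :: "'a topology \<Rightarrow> 'a set \<Rightarrow> ('a \<Rightarrow> 'a) \<Rightarrow> (nat \<Rightarrow> 'a set) \<Rightarrow> ereal" where
  "htop X I f \<xi> = (if \<exists>n. \<xi> n = {} then -\<infinity> else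
     (SUP E \<in> {E. entourage X E}. limsup (\<lambda>n. ereal (1 / real n) * elog (S_num X I f n \<xi> E))))"

end

theory Submission
  imports Defs
begin

lemma xi_sub_max:
  assumes "admissible X I f \<xi>"
  shows "\<xi> n \<subseteq> xi_max X I f n"
proof (induction n)
  case 0 then show ?case using assms unfolding admissible_def by auto
next
  case (Suc n)
  then show ?case using assms unfolding admissible_def by fastforce
qed

lemma box_diag:
  assumes "openin (prod_topology X X) U" "(y, y) \<in> U"
  shows "\<exists>W. openin X W \<and> y \<in> W \<and> W \<times> W \<subseteq> U"
proof -
  obtain A B where "openin X A" "openin X B" "y \<in> A" "y \<in> B" "A \<times> B \<subseteq> U"
    using assms openin_prod_topology_alt by metis
  then show ?thesis by (rule_tac x="A \<inter> B" in exI) auto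
qed

lemma cont_nbhd:
  assumes pc: "partially_continuous X I f"
    and U: "openin (prod_topology X X) U" "\<forall>x\<in>topspace X. (x, x) \<in> U"
  shows "y \<in> xi_max X I f n \<Longrightarrow> \<exists>V. openin X V \<and> y \<in> V \<and>
     (\<forall>z\<in>V. \<forall>i\<le>n. ((f^^i) y, (f^^i) z) \<in> U \<and> ((f^^i) z, (f^^i) y) \<in> U)"
proof (induction n arbitrary: y)
  case 0
  then obtain W where "openin X W" "y \<in> W" "W \<times> W \<subseteq> U"
    using box_diag[OF U(1)] U(2) 0 by (metis xi_max.simps(1))
  then show ?case by (rule_tac x=W in exI) auto
next
  case (Suc n)
  then have y: "y \<in> topspace X - I" "f y \<in> xi_max X I f n" by auto
  obtain V0 where V0: "openin X V0" "f y \<in> V0"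
     "\<forall>z\<in>V0. \<forall>i\<le>n. ((f^^i) (f y), (f^^i) z) \<in> U \<and> ((f^^i) z, (f^^i) (f y)) \<in> U"
    using Suc.IH y(2) by blast
  obtain W where W: "openin X W" "y \<in> W" "W \<times> W \<subseteq> U"
    using box_diag[OF U(1)] U(2) y(1) by (metis DiffD1)
  have cm: "continuous_map (subtopology X (topspace X - I)) X f" and cl: "closedin X I"
    using pc unfolding partially_continuous_def by auto
  have oXI: "openin X (topspace X - I)" using cl by auto
  have "openin (subtopology X (topspace X - I)) {x \<in> topspace (subtopology X (topspace X - I)). f x \<in> V0}"
    using openin_continuous_map_preimage[OF cm V0(1)] .
  then have "openin X {x \<in> topspace X - I. f x \<in> V0}"
    using openin_trans_full[OF _ oXI] by (simp add: Int_absorb1 Diff_subset)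
  then have oV: "openin X (W \<inter> {x \<in> topspace X - I. f x \<in> V0})"
    using W(1) by auto
  show ?case
  proof (rule exI[of _ "W \<inter> {x \<in> topspace X - I. f x \<in> V0}"], intro conjI)
    show "openin X (W \<inter> {x \<in> topspace X - I. f x \<in> V0})" by (rule oV)
    show "y \<in> W \<inter> {x \<in> topspace X - I. f x \<in> V0}" using W y V0 by auto
  next
    show "\<forall>z\<in>W \<inter> {x \<in> topspace X - I. f x \<in> V0}. \<forall>i\<le>Suc n. ((f ^^ i) y, (f ^^ i) z) \<in> U \<and> ((f ^^ i) z, (f ^^ i) y) \<in> U"
    proof (intro ballI allI impI)
    fix z i assume z: "z \<in> W \<inter> {x \<in> topspace X - I. f x \<in> V0}" and i: "i \<le> Suc n"
    show "((f ^^ i) y, (f ^^ i) z) \<in> U \<and> ((f ^^ i) z, (f ^^ i) y) \<in> U"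
    proof (cases i)
      case 0 then show ?thesis using z W y by auto
    next
      case (Suc j)
      then have "j \<le> n" using i by auto
      then show ?thesis using V0(3) z Suc by (simp add: funpow_Suc_right del: funpow.simps)
    qed
    qed
  qed
qed

lemma half_entourage:
  assumes cX: "compact_space X" and hX: "Hausdorff_space X" and E: "entourage X E"
  shows "\<exists>D. openin (prod_topology X X) D \<and> (\<forall>x\<in>topspace X. (x,x) \<in> D)
     \<and> (\<forall>x y. (x,y) \<in> D \<longrightarrow> (y,x) \<in> D) \<and> D O D \<subseteq> E"
proof -
  define T where "T = topspace X"
  obtain U where U: "openin (prod_topology X X) U" "{(x, x) | x. x \<in> topspace X} \<subseteq> U" "U \<subseteq> E"
    using E unfolding entourage_def by blast
  have "\<forall>x\<in>T. \<exists>W. openin X W \<and> x \<in> W \<and> W \<times> W \<subseteq> U"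
    using box_diag[OF U(1)] U(2) unfolding T_def by blast
  then obtain W where W: "\<And>x. x \<in> T \<Longrightarrow> openin X (W x) \<and> x \<in> W x \<and> W x \<times> W x \<subseteq> U"
    by metis
  have reg: "regular_space X" using cX hX compact_Hausdorff_imp_regular_space by blast
  have "\<forall>x\<in>T. \<exists>M. openin X M \<and> x \<in> M \<and> X closure_of M \<subseteq> W x"
  proof
    fix x assume x: "x \<in> T"
    have "closedin X (T - W x)" using W[OF x] unfolding T_def by auto
    moreover have "x \<in> topspace X - (T - W x)" using W[OF x] x unfolding T_def by auto
    ultimately obtain M where M: "openin X M" "x \<in> M" "disjnt (T - W x) (X closure_of M)"
      using reg unfolding regular_space by blast
    have "X closure_of M \<subseteq> T" unfolding T_def by (rule closure_of_subset_topspace)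
    then have "X closure_of M \<subseteq> W x" using M(3) by (auto simp: disjnt_iff)
    then show "\<exists>M. openin X M \<and> x \<in> M \<and> X closure_of M \<subseteq> W x" using M by blast
  qed
  then obtain M where M: "\<And>x. x \<in> T \<Longrightarrow> openin X (M x) \<and> x \<in> M x \<and> X closure_of (M x) \<subseteq> W x"
    by metis
  have "\<exists>\<F>. finite \<F> \<and> \<F> \<subseteq> M ` T \<and> topspace X \<subseteq> \<Union>\<F>"
    using cX unfolding compact_space_alt
    by (metis (no_types, lifting) M T_def UN_I imageE subsetI)
  then obtain \<F> where F: "finite \<F>" "\<F> \<subseteq> M ` T" "T \<subseteq> \<Union>\<F>" unfolding T_def by blast
  then obtain K where K: "finite K" "K \<subseteq> T" "\<F> = M ` K"
    by (meson finite_subset_image)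
  define g where "g k = ((T - X closure_of (M k)) \<times> (T - X closure_of (M k))) \<union> (W k \<times> W k)" for k
  define D where "D = \<Inter>(insert (T \<times> T) (g ` K))"
  have og: "openin (prod_topology X X) (g k)" if "k \<in> K" for k
  proof -
    have "openin X (T - X closure_of (M k))" unfolding T_def by auto
    then have "openin (prod_topology X X) ((T - X closure_of (M k)) \<times> (T - X closure_of (M k)))"
      by (simp add: openin_prod_Times_iff)
    moreover have "openin (prod_topology X X) (W k \<times> W k)"
      using W K that by (simp add: openin_prod_Times_iff subset_iff)
    ultimately show ?thesis unfolding g_def by auto
  qed
  have oD: "openin (prod_topology X X) D"
    unfolding D_def
  proof (rule openin_Inter)
    show "finite (insert (T \<times> T) (g ` K))" using K by auto
  next
    fix S assume "S \<in> insert (T \<times> T) (g ` K)"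
    then show "openin (prod_topology X X) S"
      using og unfolding T_def by (auto simp add: openin_prod_Times_iff)
  qed auto
  have diag: "(x,x) \<in> D" if "x \<in> topspace X" for x
  proof -
    have "(x,x) \<in> g k" if "k \<in> K" for k
    proof (cases "x \<in> X closure_of (M k)")
      case True then show ?thesis using M K that unfolding g_def by blast
    next
      case False then show ?thesis using \<open>x \<in> topspace X\<close> unfolding g_def T_def by blast
    qed
    then show ?thesis unfolding D_def T_def using that by auto
  qed
  have sym: "(y,x) \<in> D" if "(x,y) \<in> D" for x y
    using that unfolding D_def g_def by auto
  have comp: "D O D \<subseteq> E"
  proof
    fix p assume "p \<in> D O D"
    then obtain a b c where p: "p = (a,c)" "(a,b) \<in> D" "(b,c) \<in> D" by auto
    then have "b \<in> T" unfolding D_def by auto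
    then obtain k where k: "k \<in> K" "b \<in> M k" using F K by auto
    then have "b \<in> X closure_of (M k)" using M K closure_of_subset openin_subset
      by (metis subsetD)
    moreover have "(a,b) \<in> g k" "(b,c) \<in> g k" using p k unfolding D_def by auto
    ultimately have "a \<in> W k" "c \<in> W k" unfolding g_def by auto
    then have "(a,c) \<in> U" using W K k by blast
    then show "p \<in> E" using U p by auto
  qed
  show ?thesis using oD diag sym comp by blast
qed

lemma ecard_image_le:
  assumes "A \<subseteq> B" shows "ecard (p ` A) \<le> ecard B"
proof (cases "finite B")
  case True
  then have "finite A" using assms finite_subset by blast
  moreover have "card (p ` A) \<le> card B"
    using card_image_le[OF \<open>finite A\<close>] card_mono[OF True assms] le_trans by blast
  ultimately show ?thesis using True unfolding ecard_def by auto
next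
  case False then show ?thesis unfolding ecard_def by auto
qed

lemma ecard_inj:
  assumes "inj_on p A" shows "ecard (p ` A) = ecard A"
  using assms unfolding ecard_def by (auto simp: card_image finite_image_iff)

lemma elog_mono:
  assumes "a \<le> b" shows "elog a \<le> elog b"
proof (cases "b = \<infinity>")
  case True then show ?thesis unfolding elog_def by auto
next
  case False
  then obtain l where l: "b = enat l" by (cases b) auto
  then obtain k where k: "a = enat k" "k \<le> l" using assms by (cases a) auto
  show ?thesis
  proof (cases "k = 0")
    case True then show ?thesis using k unfolding elog_def by (simp add: zero_enat_def)
  next
    case False
    then have "ln (real k) \<le> ln (real l)" using k by simp
    then show ?thesis using k l False unfolding elog_def by (auto simp: zero_enat_def)
  qed
qed

lemma S_mono:
  assumes "\<xi> n \<subseteq> \<xi>' n"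
  shows "S_num X I f n \<xi> E \<le> S_num X I f n \<xi>' E"
  unfolding S_num_def
  by (rule SUP_subset_mono) (use assms in \<open>fastforce simp: separated_set_def\<close>, simp)

lemma close_point:
  assumes pc: "partially_continuous X I f" and adm: "admissible X I f \<xi>"
    and E: "entourage X E"
    and cl: "X closure_of (\<xi> n) \<subseteq> X closure_of (\<xi>' n)"
    and y: "y \<in> \<xi> n"
  shows "\<exists>z\<in>\<xi>' n. \<forall>i\<le>n. ((f^^i) y, (f^^i) z) \<in> E \<and> ((f^^i) z, (f^^i) y) \<in> E"
proof -
  obtain U where U: "openin (prod_topology X X) U" "{(x, x) | x. x \<in> topspace X} \<subseteq> U" "U \<subseteq> E"
    using E unfolding entourage_def by blast
  have ym: "y \<in> xi_max X I f n" using xi_sub_max[OF adm] y by blast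
  obtain V where V: "openin X V" "y \<in> V"
     "\<forall>z\<in>V. \<forall>i\<le>n. ((f^^i) y, (f^^i) z) \<in> U \<and> ((f^^i) z, (f^^i) y) \<in> U"
    using cont_nbhd[OF pc U(1) _ ym] U(2) by blast
  have "\<xi> n \<subseteq> topspace X" using adm unfolding admissible_def by blast
  then have "y \<in> X closure_of (\<xi> n)" using y closure_of_subset by blast
  then have "y \<in> X closure_of (\<xi>' n)" using cl by blast
  then obtain z where "z \<in> \<xi>' n" "z \<in> V" using V unfolding in_closure_of by blast
  then show ?thesis using V(3) U(3) by (meson subsetD)
qed

lemma R_part:
  assumes pc: "partially_continuous X I f" and adm: "admissible X I f \<xi>"
    and adm': "admissible X I f \<xi>'"
    and E': "sym_entourage X E'" and E'': "sym_entourage X E''"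
    and c1: "E' O E' \<subseteq> E" and c2: "E'' O E'' \<subseteq> E'"
    and cl: "X closure_of (\<xi> n) \<subseteq> X closure_of (\<xi>' n)"
  shows "R_num X I f n \<xi> E \<le> R_num X I f n \<xi>' E''"
  unfolding R_num_def
proof (rule INF_greatest)
  fix F' assume "F' \<in> {F. covering_set X I f n \<xi>' E'' F}"
  then have F': "F' \<subseteq> \<xi>' n" "\<xi>' n \<subseteq> (\<Union>x\<in>F'. dyn_ball X I f n E'' x)"
    unfolding covering_set_def by auto
  have symE': "\<And>a b. (a,b) \<in> E' \<Longrightarrow> (b,a) \<in> E'" using E' unfolding sym_entourage_def by blast
  have symE'': "\<And>a b. (a,b) \<in> E'' \<Longrightarrow> (b,a) \<in> E''" using E'' unfolding sym_entourage_def by blast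
  have ent'': "entourage X E''" using E'' unfolding sym_entourage_def by blast
  define A where "A = {x \<in> F'. dyn_ball X I f n E' x \<inter> \<xi> n \<noteq> {}}"
  define p where "p x = (SOME y. y \<in> dyn_ball X I f n E' x \<inter> \<xi> n)" for x
  have p: "p x \<in> dyn_ball X I f n E' x \<inter> \<xi> n" if "x \<in> A" for x
  proof -
    have "\<exists>y. y \<in> dyn_ball X I f n E' x \<inter> \<xi> n" using that unfolding A_def by blast
    then show ?thesis unfolding p_def by (rule someI_ex)
  qed
  have inball: "\<exists>x\<in>A. y \<in> dyn_ball X I f n E' x" if y: "y \<in> \<xi> n" for y
  proof -
    obtain z where z: "z \<in> \<xi>' n" "\<forall>i\<le>n. ((f^^i) y, (f^^i) z) \<in> E'' \<and> ((f^^i) z, (f^^i) y) \<in> E''"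
      using close_point[where \<xi>'="\<xi>'" and n=n, OF pc adm ent'' cl y] by blast
    obtain x where x: "x \<in> F'" "z \<in> dyn_ball X I f n E'' x" using F' z by blast
    have "\<forall>i\<le>n. ((f^^i) x, (f^^i) y) \<in> E'"
    proof (intro allI impI)
      fix i assume "i \<le> n"
      then have "((f^^i) x, (f^^i) z) \<in> E''" "((f^^i) z, (f^^i) y) \<in> E''"
        using x z unfolding dyn_ball_def by auto
      then show "((f^^i) x, (f^^i) y) \<in> E'" by (rule subsetD[OF c2 relcompI])
    qed
    moreover have "y \<in> xi_max X I f n" using xi_sub_max[OF adm] y by blast
    ultimately have "y \<in> dyn_ball X I f n E' x" unfolding dyn_ball_def by blast
    then show ?thesis using x y unfolding A_def by blast
  qed
  have cov: "covering_set X I f n \<xi> E (p ` A)"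
    unfolding covering_set_def
  proof (intro conjI subsetI)
    fix y assume "y \<in> p ` A" then show "y \<in> \<xi> n" using p by blast
  next
    fix y assume y: "y \<in> \<xi> n"
    then obtain x where x: "x \<in> A" "y \<in> dyn_ball X I f n E' x" using inball by blast
    have px: "p x \<in> dyn_ball X I f n E' x" using p x by blast
    have "\<forall>i\<le>n. ((f^^i) (p x), (f^^i) y) \<in> E"
    proof (intro allI impI)
      fix i assume "i \<le> n"
      then have "((f^^i) x, (f^^i) (p x)) \<in> E'" "((f^^i) x, (f^^i) y) \<in> E'"
        using x px unfolding dyn_ball_def by auto
      then show "((f^^i) (p x), (f^^i) y) \<in> E" by (metis subsetD[OF c1 relcompI[OF symE']])
    qed
    then have "y \<in> dyn_ball X I f n E (p x)" using x unfolding dyn_ball_def by blast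
    then show "y \<in> (\<Union>x\<in>p ` A. dyn_ball X I f n E x)" using x by blast
  qed
  have "ecard (p ` A) \<le> ecard F'" by (rule ecard_image_le) (auto simp: A_def)
  then show "(INF F \<in> {F. covering_set X I f n \<xi> E F}. ecard F) \<le> ecard F'"
    using cov by (meson INF_lower2 mem_Collect_eq)
qed

lemma S_cmp:
  assumes pc: "partially_continuous X I f" and adm: "admissible X I f \<xi>"
    and D: "entourage X D"
    and t2: "\<And>a b c. (a,b) \<in> D \<Longrightarrow> (b,c) \<in> D \<Longrightarrow> (a,c) \<in> E"
    and t3: "\<And>a b c d. (a,b) \<in> D \<Longrightarrow> (b,c) \<in> D \<Longrightarrow> (c,d) \<in> D \<Longrightarrow> (a,d) \<in> E"
    and cl: "X closure_of (\<xi> n) \<subseteq> X closure_of (\<xi>' n)"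
  shows "S_num X I f n \<xi> E \<le> S_num X I f n \<xi>' D"
  unfolding S_num_def
proof (rule SUP_least)
  fix A assume "A \<in> {F. separated_set X I f n \<xi> E F}"
  then have A: "A \<subseteq> \<xi> n" "\<And>x y. x \<in> A \<Longrightarrow> y \<in> A \<Longrightarrow> x \<noteq> y \<Longrightarrow> x \<notin> dyn_ball X I f n E y"
    by (simp_all add: separated_set_def)
  have "\<forall>a\<in>A. \<exists>z\<in>\<xi>' n. \<forall>i\<le>n. ((f^^i) a, (f^^i) z) \<in> D \<and> ((f^^i) z, (f^^i) a) \<in> D"
    using close_point[where \<xi>'="\<xi>'" and n=n, OF pc adm D cl] A(1) by blast
  then obtain zf where zf: "\<And>a. a \<in> A \<Longrightarrow> zf a \<in> \<xi>' n"
    "\<And>a i. a \<in> A \<Longrightarrow> i \<le> n \<Longrightarrow> ((f^^i) a, (f^^i) (zf a)) \<in> D \<and> ((f^^i) (zf a), (f^^i) a) \<in> D"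
    by metis
  have inA: "a \<in> xi_max X I f n" if "a \<in> A" for a using xi_sub_max[OF adm] A(1) that by blast
  have inj: "inj_on zf A"
  proof (rule inj_onI, rule ccontr)
    fix a b assume ab: "a \<in> A" "b \<in> A" "zf a = zf b" "a \<noteq> b"
    have "\<forall>i\<le>n. ((f^^i) b, (f^^i) a) \<in> E"
    proof (intro allI impI)
      fix i assume i: "i \<le> n"
      show "((f^^i) b, (f^^i) a) \<in> E"
        using t2[of "(f^^i) b" "(f^^i) (zf b)" "(f^^i) a"] zf(2)[OF ab(1) i] zf(2)[OF ab(2) i] ab(3)
        by simp
    qed
    then have "a \<in> dyn_ball X I f n E b" using inA[OF ab(1)] unfolding dyn_ball_def by blast
    then show False using A(2)[OF ab(1) ab(2) ab(4)] by blast
  qed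
  have sep: "separated_set X I f n \<xi>' D (zf ` A)"
    unfolding separated_set_def
  proof (intro conjI ballI impI)
    show "zf ` A \<subseteq> \<xi>' n" using zf(1) by blast
  next
    fix x y assume xy: "x \<in> zf ` A" "y \<in> zf ` A" "x \<noteq> y"
    then obtain a b where ab: "a \<in> A" "b \<in> A" "x = zf a" "y = zf b" by blast
    then have "a \<noteq> b" using xy by blast
    show "x \<notin> dyn_ball X I f n D y"
    proof
      assume "x \<in> dyn_ball X I f n D y"
      then have h: "\<And>i. i \<le> n \<Longrightarrow> ((f^^i) (zf b), (f^^i) (zf a)) \<in> D"
        using ab unfolding dyn_ball_def by blast
      have "\<forall>i\<le>n. ((f^^i) b, (f^^i) a) \<in> E"
      proof (intro allI impI)
        fix i assume i: "i \<le> n"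
        show "((f^^i) b, (f^^i) a) \<in> E"
          using t3[of "(f^^i) b" "(f^^i) (zf b)" "(f^^i) (zf a)" "(f^^i) a"] zf(2)[OF ab(1) i] zf(2)[OF ab(2) i] h[OF i]
          by simp
      qed
      then have "a \<in> dyn_ball X I f n E b" using inA[OF ab(1)] unfolding dyn_ball_def by blast
      then show False using A(2)[OF ab(1) ab(2) \<open>a \<noteq> b\<close>] by blast
    qed
  qed
  have "ecard A = ecard (zf ` A)" using ecard_inj[OF inj] by simp
  also have "\<dots> \<le> (SUP F \<in> {F. separated_set X I f n \<xi>' D F}. ecard F)"
    using sep by (meson SUP_upper mem_Collect_eq)
  finally show "ecard A \<le> (SUP F \<in> {F. separated_set X I f n \<xi>' D F}. ecard F)" .
qed

lemma open_refl_entourage: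
  assumes "openin (prod_topology X X) D" "\<forall>x\<in>topspace X. (x,x) \<in> D"
  shows "entourage X D"
proof -
  have "D \<subseteq> topspace X \<times> topspace X" using openin_subset[OF assms(1)] by simp
  then show ?thesis unfolding entourage_def using assms by blast
qed

theorem lemma1p12:
  fixes X :: "'a topology" and I :: "'a set" and f :: "'a \<Rightarrow> 'a"
    and \<xi> \<xi>' :: "nat \<Rightarrow> 'a set" and E E' E'' :: "('a \<times> 'a) set" and n :: nat
  assumes "compact_space X" and "Hausdorff_space X"
    and "partially_continuous X I f"
    and "admissible X I f \<xi>" and "admissible X I f \<xi>'"
    and "sym_entourage X E" and "sym_entourage X E'" and "sym_entourage X E''"
    and "E' O E' \<subseteq> E" and "E'' O E'' \<subseteq> E'"
  shows "(\<xi> n \<subseteq> \<xi>' n \<longrightarrow> S_num X I f n \<xi> E \<le> S_num X I f n \<xi>' E)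
    \<and> (X closure_of (\<xi> n) \<subseteq> X closure_of (\<xi>' n) \<longrightarrow> R_num X I f n \<xi> E \<le> R_num X I f n \<xi>' E'')
    \<and> ((\<exists>N. \<forall>m\<ge>N. X closure_of (\<xi> m) \<subseteq> X closure_of (\<xi>' m)) \<longrightarrow> htop X I f \<xi> \<le> htop X I f \<xi>')"
proof -
  note cX = assms(1) and hX = assms(2) and pc = assms(3) and adm = assms(4) and adm' = assms(5)
  have P1: "\<xi> n \<subseteq> \<xi>' n \<longrightarrow> S_num X I f n \<xi> E \<le> S_num X I f n \<xi>' E"
    using S_mono by blast
  have P2: "X closure_of (\<xi> n) \<subseteq> X closure_of (\<xi>' n) \<longrightarrow> R_num X I f n \<xi> E \<le> R_num X I f n \<xi>' E''"
    using R_part[OF pc adm adm' assms(7) assms(8) assms(9) assms(10)] by blast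
  have P3: "(\<exists>N. \<forall>m\<ge>N. X closure_of (\<xi> m) \<subseteq> X closure_of (\<xi>' m)) \<longrightarrow> htop X I f \<xi> \<le> htop X I f \<xi>'"
  proof
    assume "\<exists>N. \<forall>m\<ge>N. X closure_of (\<xi> m) \<subseteq> X closure_of (\<xi>' m)"
    then obtain N where N: "\<And>m. m \<ge> N \<Longrightarrow> X closure_of (\<xi> m) \<subseteq> X closure_of (\<xi>' m)" by blast
    show "htop X I f \<xi> \<le> htop X I f \<xi>'"
    proof (cases "\<exists>n. \<xi> n = {}")
      case True then show ?thesis by (simp add: htop_def)
    next
      case False
      have ne': "\<not> (\<exists>n. \<xi>' n = {})"
      proof
        assume "\<exists>n. \<xi>' n = {}" then obtain m where m: "\<xi>' m = {}" by blast
        have emp: "\<xi>' k = {}" if "m \<le> k" for k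
          using that
        proof (induction k rule: dec_induct)
          case base then show ?case using m .
        next
          case (step k)
          then show ?case using adm' unfolding admissible_def by blast
        qed
        have "X closure_of (\<xi> (max N m)) \<subseteq> {}"
          using N[of "max N m"] emp[of "max N m"] by simp
        moreover have "\<xi> (max N m) \<subseteq> X closure_of (\<xi> (max N m))"
          using adm unfolding admissible_def by (meson closure_of_subset subset_trans Diff_subset)
        ultimately show False using False by blast
      qed
      have "(SUP E\<in>{E. entourage X E}. limsup (\<lambda>n. ereal (1 / real n) * elog (S_num X I f n \<xi> E)))
          \<le> (SUP E\<in>{E. entourage X E}. limsup (\<lambda>n. ereal (1 / real n) * elog (S_num X I f n \<xi>' E)))"
      proof (rule SUP_least)
        fix E0 assume "E0 \<in> {E. entourage X E}"
        then have E0: "entourage X E0" by simp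
        obtain D1 where D1: "openin (prod_topology X X) D1" "\<forall>x\<in>topspace X. (x,x) \<in> D1"
          "D1 O D1 \<subseteq> E0"
          using half_entourage[OF cX hX E0] by blast
        have eD1: "entourage X D1" using open_refl_entourage D1 by blast
        obtain D where D: "openin (prod_topology X X) D" "\<forall>x\<in>topspace X. (x,x) \<in> D"
          "D O D \<subseteq> D1"
          using half_entourage[OF cX hX eD1] by blast
        have eD: "entourage X D" using open_refl_entourage D by blast
        have DT: "a \<in> topspace X \<and> b \<in> topspace X" if "(a,b) \<in> D" for a b
          using openin_subset[OF D(1)] that by auto
        have D1T: "a \<in> topspace X \<and> b \<in> topspace X" if "(a,b) \<in> D1" for a b
          using openin_subset[OF D1(1)] that by auto
        have DD: "(a,c) \<in> D1" if "(a,b) \<in> D" "(b,c) \<in> D" for a b c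
          using that D(3) by blast
        have t2: "(a,c) \<in> E0" if "(a,b) \<in> D" "(b,c) \<in> D" for a b c
        proof -
          have "(a,c) \<in> D1" using DD that .
          moreover have "(c,c) \<in> D1" using D1(2) D1T calculation by blast
          ultimately show ?thesis using D1(3) by blast
        qed
        have t3: "(a,d) \<in> E0" if "(a,b) \<in> D" "(b,c) \<in> D" "(c,d) \<in> D" for a b c d
        proof -
          have "(a,c) \<in> D1" using DD that(1,2) .
          moreover have "(d,d) \<in> D" using D(2) DT that(3) by blast
          then have "(c,d) \<in> D1" using DD that(3) by blast
          ultimately show ?thesis using D1(3) by blast
        qed
        have ev: "eventually (\<lambda>k. ereal (1 / real k) * elog (S_num X I f k \<xi> E0)
             \<le> ereal (1 / real k) * elog (S_num X I f k \<xi>' D)) sequentially"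
          unfolding eventually_sequentially
        proof (intro exI allI impI)
          fix k assume "k \<ge> N"
          have "S_num X I f k \<xi> E0 \<le> S_num X I f k \<xi>' D"
            apply (rule S_cmp[OF pc adm eD])
              apply (rule t2; assumption)
             apply (rule t3; assumption)
            using N \<open>k \<ge> N\<close> by blast
          then show "ereal (1 / real k) * elog (S_num X I f k \<xi> E0)
             \<le> ereal (1 / real k) * elog (S_num X I f k \<xi>' D)"
            by (intro ereal_mult_left_mono elog_mono) auto
        qed
        have "limsup (\<lambda>n. ereal (1 / real n) * elog (S_num X I f n \<xi> E0))
            \<le> limsup (\<lambda>n. ereal (1 / real n) * elog (S_num X I f n \<xi>' D))"
          by (rule Limsup_mono[OF ev])
        also have "\<dots> \<le> (SUP E\<in>{E. entourage X E}. limsup (\<lambda>n. ereal (1 / real n) * elog (S_num X I f n \<xi>' E)))"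
          using eD by (intro SUP_upper) simp
        finally show "limsup (\<lambda>n. ereal (1 / real n) * elog (S_num X I f n \<xi> E0))
            \<le> (SUP E\<in>{E. entourage X E}. limsup (\<lambda>n. ereal (1 / real n) * elog (S_num X I f n \<xi>' E)))" .
      qed
      then show ?thesis using False ne' by (simp add: htop_def)
    qed
  qed
  show ?thesis using P1 P2 P3 by blast
qed

end
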